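(* The infinite word $u_\beta$ has affine factor complexity (i.e. $\mathcal C(n)=an+b$ for all $n\in\mathbb N$ for some constants $a,b$) if and only if every left special factor of $u_\beta$ is a prefix of $u_\beta$.
   Context: $\beta>1$ is a simple Parry number with $d_\beta(1)=t_1\cdots t_m$, $m\ge2$, nonnegative integer digits, $t_1\ge1$, $t_m\ge1$, satisfying the Parry condition ($t_i\cdots t_m0^\omega$ lexicographically strictly smaller than $t_1\cdots t_m0^\omega$ for $2\le i\le m$). $\varphi$ is the substitution on $\mathcal A=\{0,\dots,m-1\}$ with $\varphi(k)=0^{t_{k+1}}(k+1)$ for $0\le k\le m-2$, $\varphi(m-1)=0^{t_m}$, and $u_\beta=\lim_n\varphi^n(0)$ is its fixed point. $\mathcal C(n)$ is the number of factors of $u_\beta$ of length $n$. For a factor $w$, ${\rm Lext}(w)=\{a\in\mathcal A: aw \text{ is a factor}\}$; $w$ is left special if $\#{\rm Lext}(w)\ge2$. *)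

theory Defs
  imports Complex_Main
begin

definition renyi_T :: "real \<Rightarrow> real \<Rightarrow> real" where
  "renyi_T \<beta> x = \<beta> * x - of_int \<lfloor>\<beta> * x\<rfloor>"

text \<open>The (i+1)-th digit t_(i+1) of d_beta(1) (0-indexed here):
  t_(i+1) = floor (beta * T^i(1)).\<close>
definition renyi_digit :: "real \<Rightarrow> nat \<Rightarrow> nat" where
  "renyi_digit \<beta> i = nat \<lfloor>\<beta> * ((renyi_T \<beta> ^^ i) 1)\<rfloor>"

definition dbeta_one_is :: "real \<Rightarrow> nat list \<Rightarrow> bool" where
  "dbeta_one_is \<beta> t \<longleftrightarrow>
     (\<forall>i. renyi_digit \<beta> i = (if i < length t then t ! i else 0))"

definition lex_less_seq :: "(nat \<Rightarrow> nat) \<Rightarrow> (nat \<Rightarrow> nat) \<Rightarrow> bool" where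
  "lex_less_seq x y \<longleftrightarrow> (\<exists>k. (\<forall>j<k. x j = y j) \<and> x k < y k)"

definition zero_ext :: "nat list \<Rightarrow> nat \<Rightarrow> nat" where
  "zero_ext t j = (if j < length t then t ! j else 0)"

text \<open>t_i ... t_m 0^omega <lex t_1 ... t_m 0^omega for 2 <= i <= m
  (i.e. shift by i-1 = 1 .. m-1).\<close>
definition parry_condition :: "nat list \<Rightarrow> bool" where
  "parry_condition t \<longleftrightarrow>
     (\<forall>i. 1 \<le> i \<and> i < length t \<longrightarrow> lex_less_seq (\<lambda>j. zero_ext t (i + j)) (zero_ext t))"

text \<open>phi(k) = 0^(t_(k+1)) (k+1) for k <= m-2, phi(m-1) = 0^(t_m).
  With 0-indexed lists, t_(k+1) = t ! k.\<close>
definition phi :: "nat list \<Rightarrow> nat \<Rightarrow> nat list" where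
  "phi t k = (if k + 1 < length t then replicate (t ! k) 0 @ [k + 1]
              else replicate (t ! k) 0)"

definition phi_word :: "nat list \<Rightarrow> nat list \<Rightarrow> nat list" where
  "phi_word t w = concat (map (phi t) w)"

definition u_beta :: "nat list \<Rightarrow> nat \<Rightarrow> nat" where
  "u_beta t = (THE u. \<forall>n i. i < length ((phi_word t ^^ n) [0]) \<longrightarrow>
                         u i = ((phi_word t ^^ n) [0]) ! i)"

definition factor :: "(nat \<Rightarrow> nat) \<Rightarrow> nat list \<Rightarrow> bool" where
  "factor u w \<longleftrightarrow> (\<exists>i. w = map u [i..<i + length w])"

definition is_prefix :: "(nat \<Rightarrow> nat) \<Rightarrow> nat list \<Rightarrow> bool" where
  "is_prefix u w \<longleftrightarrow> w = map u [0..<length w]"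

definition complexity :: "(nat \<Rightarrow> nat) \<Rightarrow> nat \<Rightarrow> nat" where
  "complexity u n = card {w. length w = n \<and> factor u w}"

definition Lext :: "nat \<Rightarrow> (nat \<Rightarrow> nat) \<Rightarrow> nat list \<Rightarrow> nat set" where
  "Lext m u w = {a. a < m \<and> factor u (a # w)}"

definition left_special :: "nat \<Rightarrow> (nat \<Rightarrow> nat) \<Rightarrow> nat list \<Rightarrow> bool" where
  "left_special m u w \<longleftrightarrow> card (Lext m u w) \<ge> 2"

end

theory Submission
  imports Defs
begin

locale pset =
  fixes t :: "nat list" and m :: nat
  assumes len: "length t = m" and m2: "m \<ge> 2" and t0: "t!0 \<ge> 1" and tm: "t!(m-1) \<ge> 1"
begin

lemmas [simp] = len

abbreviation ph where "ph \<equiv> phi_word t"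
definition U :: "nat \<Rightarrow> nat list" where "U n = (ph ^^ n) [0]"

lemma ph_append[simp]: "ph (xs @ ys) = ph xs @ ph ys" by (simp add: phi_word_def)
lemma ph_Cons[simp]: "ph (x # xs) = phi t x @ ph xs" by (simp add: phi_word_def)
lemma ph_Nil[simp]: "ph [] = []" by (simp add: phi_word_def)

lemma phk_append: "(ph^^k) (xs @ ys) = (ph^^k) xs @ (ph^^k) ys"
  by (induction k) auto

lemma phi_ne: "c < m \<Longrightarrow> phi t c \<noteq> []"
proof -
  assume c: "c < m"
  show ?thesis
  proof (cases "c + 1 < m")
    case True then show ?thesis by (simp add: phi_def)
  next
    case False
    then have "c = m - 1" using c by simp
    then show ?thesis using tm False by (simp add: phi_def)
  qed
qed

lemma phi_set: "set (phi t c) \<subseteq> {..<m}"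
  using m2 by (auto simp: phi_def)

lemma ph_set: "set (ph w) \<subseteq> {..<m}"
  using phi_set by (induction w) auto

lemma phk_set: "set w \<subseteq> {..<m} \<Longrightarrow> set ((ph^^k) w) \<subseteq> {..<m}"
  using ph_set by (induction k) auto

lemma U_set: "set (U n) \<subseteq> {..<m}"
  unfolding U_def using m2 by (intro phk_set) auto

lemma last_phi: "c < m \<Longrightarrow> last (phi t c) = (c+1) mod m"
proof -
  assume c: "c < m"
  show ?thesis
  proof (cases "c + 1 < m")
    case True then show ?thesis by (simp add: phi_def)
  next
    case False
    then have "c = m - 1" using c by simp
    then show ?thesis using tm False c by (simp add: phi_def)
  qed
qed

lemma ph_ne: "w \<noteq> [] \<Longrightarrow> set w \<subseteq> {..<m} \<Longrightarrow> ph w \<noteq> []"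
  by (cases w) (auto dest: phi_ne)

lemma last_ph: "w \<noteq> [] \<Longrightarrow> set w \<subseteq> {..<m} \<Longrightarrow> last (ph w) = (last w + 1) mod m"
proof -
  assume "w \<noteq> []" "set w \<subseteq> {..<m}"
  then obtain ys y where w: "w = ys @ [y]" and y: "y < m" by (metis rev_exhaust subsetD insertI1 lessThan_iff set_append Un_iff list.set(2))
  then show ?thesis using phi_ne[OF y] last_phi[OF y] by simp
qed

lemma phk_single: "c < m \<Longrightarrow> (ph^^k) [c] \<noteq> [] \<and> set ((ph^^k) [c]) \<subseteq> {..<m} \<and> last ((ph^^k) [c]) = (c + k) mod m"
proof (induction k)
  case 0 then show ?case by simp
next
  case (Suc k)
  then have h: "(ph^^k) [c] \<noteq> []" "set ((ph^^k) [c]) \<subseteq> {..<m}" "last ((ph^^k) [c]) = (c + k) mod m" by auto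
  have "last ((ph^^Suc k) [c]) = ((c + k) mod m + 1) mod m" using last_ph[OF h(1,2)] h(3) by simp
  also have "\<dots> = (c + Suc k) mod m" by (simp add: mod_Suc_eq)
  finally show ?case using ph_ne[OF h(1,2)] ph_set by simp
qed

lemma U_Suc: "U (Suc n) = ph (U n)" by (simp add: U_def)

lemma U_add: "U (n + k) = (ph^^k) (U n)"
  by (simp add: U_def funpow_add add.commute[of n k])

lemma U_1: "U 1 = [0] @ (replicate (t!0 - 1) 0 @ [1])"
proof -
  have "U 1 = phi t 0" by (simp add: U_def)
  also have "\<dots> = replicate (t!0) 0 @ [1]" using m2 by (simp add: phi_def)
  also have "replicate (t!0) 0 = 0 # replicate (t!0 - 1) 0" using t0
    by (metis Suc_diff_1 less_le_trans zero_less_one replicate_Suc)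
  finally show ?thesis by simp
qed

lemma U_prefix: "\<exists>r. U (Suc n) = U n @ r"
proof (induction n)
  case 0 then show ?case using U_1 by (auto simp: U_def)
next
  case (Suc n)
  then obtain r where "U (Suc n) = U n @ r" by blast
  then have "U (Suc (Suc n)) = U (Suc n) @ ph r" by (simp add: U_Suc)
  then show ?case by blast
qed

lemma U_prefix_le: "n \<le> k \<Longrightarrow> \<exists>r. U k = U n @ r"
proof (induction k rule: dec_induct)
  case base then show ?case by simp
next
  case (step k)
  then obtain r where "U k = U n @ r" by blast
  moreover obtain r' where "U (Suc k) = U k @ r'" using U_prefix by blast
  ultimately show ?case by auto
qed

lemma U_hd: "U n = 0 # tl (U n)"
  using U_prefix_le[of 0 n] by (auto simp: U_def)

lemma ph_len: "set w \<subseteq> {..<m} \<Longrightarrow> length (ph w) \<ge> length w"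
proof (induction w)
  case Nil then show ?case by simp
next
  case (Cons a w)
  then have "phi t a \<noteq> []" using phi_ne by auto
  then have "length (phi t a) \<ge> 1" by (simp add: Suc_leI)
  then show ?case using Cons by simp
qed

lemma U_len: "length (U n) \<ge> n + 1"
proof (induction n)
  case 0 then show ?case by (simp add: U_def)
next
  case (Suc n)
  have s: "set (tl (U n)) \<subseteq> {..<m}" using U_set by (metis list.set_sel(2) subset_iff tl_Nil)
  have "U (Suc n) = phi t 0 @ ph (tl (U n))" using U_hd[of n] by (metis U_Suc ph_Cons)
  moreover have "length (phi t 0) \<ge> 2" using t0 m2 by (simp add: phi_def)
  moreover have "length (U n) = Suc (length (tl (U n)))" using U_hd[of n] by (metis length_Cons)
  ultimately show ?case using ph_len[OF s] Suc by simp
qed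

lemma U_nth: "n \<le> k \<Longrightarrow> i < length (U n) \<Longrightarrow> U k ! i = U n ! i"
  using U_prefix_le[of n k] by (auto simp: nth_append)

lemma u_eq: "u_beta t = (\<lambda>i. U i ! i)"
proof -
  have P: "\<forall>n i. i < length (U n) \<longrightarrow> (\<lambda>i. U i ! i) i = U n ! i"
  proof (intro allI impI)
    fix n i assume i: "i < length (U n)"
    show "(\<lambda>i. U i ! i) i = U n ! i"
    proof (cases "n \<le> i")
      case True then show ?thesis using U_nth i by simp
    next
      case False
      have "i < length (U i)" using U_len[of i] by simp
      then show ?thesis using U_nth[of i n i] False by simp
    qed
  qed
  show ?thesis unfolding u_beta_def U_def[symmetric]
  proof (rule the_equality)
    show "\<forall>n i. i < length (U n) \<longrightarrow> (\<lambda>i. U i ! i) i = U n ! i" by (rule P)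
  next
    fix v assume "\<forall>n i. i < length (U n) \<longrightarrow> v i = U n ! i"
    then have "\<And>i. v i = U i ! i" using U_len by (metis Suc_eq_plus1 Suc_le_lessD)
    then show "v = (\<lambda>i. U i ! i)" by auto
  qed
qed

lemma u_nth: "i < length (U n) \<Longrightarrow> u_beta t i = U n ! i"
  unfolding u_eq using U_nth U_len
  by (metis Suc_eq_plus1 Suc_le_lessD nat_le_linear)

lemma u_lt: "u_beta t i < m"
  using U_set U_len u_nth by (metis Suc_eq_plus1 Suc_le_lessD lessThan_iff nth_mem subsetD)


abbreviation u where "u \<equiv> u_beta t"

lemma take_U: "n \<le> length (U k) \<Longrightarrow> map u [0..<n] = take n (U k)"
  by (intro nth_equalityI) (auto simp: u_nth)

lemma factor_iff: "factor u w \<longleftrightarrow> (\<exists>n ps ss. U n = ps @ w @ ss)"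
proof
  assume "factor u w"
  then obtain i where w: "w = map u [i..<i + length w]" by (auto simp: factor_def)
  define n where "n = i + length w"
  have ln: "length (U n) > n" using U_len[of n] by simp
  have wj: "w ! j = U n ! (i + j)" if "j < length w" for j
  proof -
    define l where "l = length w"
    have wl: "w = map u [i..<i + l]" using w l_def by simp
    have "w ! j = (map u [i..<i + l]) ! j" using wl by (rule arg_cong)
    also have "\<dots> = u (i + j)" using that l_def by simp
    also have "\<dots> = U n ! (i + j)" using ln that n_def by (intro u_nth) simp
    finally show ?thesis .
  qed
  have "take (length w) (drop i (U n)) = w"
    using ln by (intro nth_equalityI) (auto simp: wj n_def)
  then have "U n = take i (U n) @ w @ drop (length w) (drop i (U n))"
    by (metis append_take_drop_id)
  then show "\<exists>n ps ss. U n = ps @ w @ ss" by blast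
next
  assume "\<exists>n ps ss. U n = ps @ w @ ss"
  then obtain n ps ss where e: "U n = ps @ w @ ss" by blast
  have "w = map u [length ps..<length ps + length w]"
  proof (intro nth_equalityI)
    fix j assume "j < length w"
    then have "u (length ps + j) = U n ! (length ps + j)" using e by (intro u_nth) simp
    then show "w ! j = map u [length ps..<length ps + length w] ! j" using e \<open>j < length w\<close>
      by (simp add: nth_append)
  qed simp
  then show "factor u w" unfolding factor_def by blast
qed

lemma Lext_prefix: "a < m \<Longrightarrow> factor u (a # map u [0..<n])"
proof -
  assume a: "a < m"
  have lm: "length (U m) \<ge> 2" using U_len[of m] m2 by simp
  have last0: "last (U m) = 0" using phk_single[of 0 m] m2 unfolding U_def by simp
  obtain ys y where e1: "U m = ys @ [y]" by (metis U_hd list.distinct(1) rev_exhaust)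
  then have "ys \<noteq> []" using lm by auto
  then obtain ps b where e2: "ys = ps @ [b]" by (metis rev_exhaust)
  have y0: "y = 0" using e1 last0 by simp
  have b: "b < m" using U_set[of m] e1 e2 by auto
  define k where "k = (m - b + a) + m * n"
  have kmod: "(b + k) mod m = a" unfolding k_def using b a
    by (simp add: add.assoc[symmetric])
  have hk: "(ph^^k) [b] \<noteq> []" "last ((ph^^k) [b]) = a" using phk_single[OF b, of k] kmod by auto
  then obtain zs where ez: "(ph^^k) [b] = zs @ [a]" by (metis append_butlast_last_id)
  have "U (m + k) = (ph^^k) (U m)" by (rule U_add)
  also have "\<dots> = (ph^^k) ps @ zs @ [a] @ U k"
  proof -
    have "(ph^^k) [b,0] = (ph^^k)[b] @ (ph^^k)[0]" using phk_append[of k "[b]" "[0]"] by simp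
    then show ?thesis using e1 e2 y0 ez by (simp add: phk_append U_def)
  qed
  finally have e3: "U (m + k) = ((ph^^k) ps @ zs) @ (a # take n (U k)) @ drop n (U k)" by simp
  have "n \<le> k" unfolding k_def using m2
    by (metis add.commute le_add2 le_trans mult_le_mono1 mult_1 one_le_numeral le_trans[of 1 2 m])
  then have "n \<le> length (U k)" using U_len[of k] by simp
  then have "map u [0..<n] = take n (U k)" by (rule take_U)
  then show ?thesis using e3 factor_iff by metis
qed

lemma Lext_prefix_eq: "Lext m u (map u [0..<n]) = {..<m}"
  using Lext_prefix by (auto simp: Lext_def)

lemma factor_set: "factor u w \<Longrightarrow> set w \<subseteq> {..<m}"
proof -
  assume "factor u w"
  then obtain i where wi: "w = map u [i..<i + length w]" by (auto simp: factor_def)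
  define l where "l = length w"
  have "w = map u [i..<i + l]" using wi l_def by simp
  then show ?thesis using u_lt by auto
qed

lemma factor_tl: "factor u (a # w) \<Longrightarrow> factor u w"
proof -
  assume "factor u (a # w)"
  then obtain i where "a # w = map u [i..<i + Suc (length w)]" by (auto simp: factor_def)
  then have "w = map u [Suc i..<Suc i + length w]" by (simp del: upt_Suc add: upt_conv_Cons)
  then show ?thesis unfolding factor_def by blast
qed

definition F :: "nat \<Rightarrow> nat list set" where "F n = {w. length w = n \<and> factor u w}"

lemma finite_F: "finite (F n)"
proof -
  have "F n \<subseteq> {w. set w \<subseteq> {..<m} \<and> length w = n}" using factor_set by (auto simp: F_def)
  then show ?thesis using finite_lists_length_eq[of "{..<m}" n] finite_subset by blast
qed

lemma finite_Lext: "finite (Lext m u w)"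
  by (rule finite_subset[of _ "{..<m}"]) (auto simp: Lext_def)

lemma card_Lext_le: "card (Lext m u w) \<le> m"
  by (metis card_lessThan card_mono finite_lessThan subsetI Lext_def mem_Collect_eq lessThan_iff)

lemma C_Suc: "card (F (Suc n)) = (\<Sum>w\<in>F n. card (Lext m u w))"
proof -
  have "F (Suc n) = (\<lambda>(w,a). a # w) ` (SIGMA w:F n. Lext m u w)"
  proof (intro equalityI subsetI)
    fix x assume x: "x \<in> F (Suc n)"
    then obtain a w where xe: "x = a # w" by (cases x) (auto simp: F_def)
    have "factor u (a # w)" using x xe by (auto simp: F_def)
    then have "a < m" "factor u w" using factor_set[OF \<open>factor u (a # w)\<close>] factor_tl by auto
    then show "x \<in> (\<lambda>(w,a). a # w) ` (SIGMA w:F n. Lext m u w)"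
      using x xe \<open>factor u (a # w)\<close> by (intro image_eqI[of _ _ "(w,a)"]) (auto simp: F_def Lext_def)
  next
    fix x assume "x \<in> (\<lambda>(w,a). a # w) ` (SIGMA w:F n. Lext m u w)"
    then show "x \<in> F (Suc n)" by (auto simp: F_def Lext_def)
  qed
  moreover have "inj_on (\<lambda>(w,a). a # w) (SIGMA w:F n. Lext m u w)"
    by (auto simp: inj_on_def)
  ultimately have "card (F (Suc n)) = card (SIGMA w:F n. Lext m u w)" by (simp add: card_image)
  also have "\<dots> = (\<Sum>w\<in>F n. card (Lext m u w))"
    using finite_F finite_Lext by (simp add: card_SigmaI)
  finally show ?thesis .
qed

abbreviation P where "P n \<equiv> map u [0..<n]"

lemma P_F: "P n \<in> F n"
  unfolding F_def factor_def by (auto intro: exI[of _ 0])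

lemma card_P: "card (Lext m u (P n)) = m"
  using Lext_prefix_eq by simp

lemma prefix_P: "is_prefix u w \<Longrightarrow> w = P (length w)"
  by (simp add: is_prefix_def)

lemma Lext_pos: "w \<in> F n \<Longrightarrow> card (Lext m u w) \<ge> 1"
proof -
  assume w: "w \<in> F n"
  show ?thesis
  proof (cases "w = P n")
    case True then show ?thesis using card_P m2 by simp
  next
    case False
    obtain i where wi: "w = map u [i..<i + n]" using w by (auto simp: F_def factor_def)
    have "i \<noteq> 0"
    proof
      assume "i = 0" then show False using False wi by simp
    qed
    then have "u (i - 1) # w = map u [i - 1..<(i - 1) + length (u (i - 1) # w)]"
      using wi by (simp add: upt_conv_Cons)
    then have "factor u (u (i - 1) # w)" unfolding factor_def by (rule exI)
    then have "u (i - 1) \<in> Lext m u w" by (simp add: Lext_def u_lt)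
    then have "Lext m u w \<noteq> {}" by blast
    then show ?thesis using finite_Lext by (simp add: Suc_leI card_gt_0_iff)
  qed
qed

lemma F0: "F 0 = {[]}"
  unfolding F_def factor_def by auto

end

theorem proposition3:
  fixes \<beta> :: real and t :: "nat list" and m :: nat
  assumes "\<beta> > 1"
    and "m = length t" and "m \<ge> 2"
    and "t ! 0 \<ge> 1" and "t ! (m - 1) \<ge> 1"
    and "parry_condition t"
    and "dbeta_one_is \<beta> t"
  shows "(\<exists>a b :: real. \<forall>n. real (complexity (u_beta t) n) = a * real n + b)
     \<longleftrightarrow> (\<forall>w. factor (u_beta t) w \<and> left_special m (u_beta t) w \<longrightarrow> is_prefix (u_beta t) w)"
proof -
  interpret pset t m using assms by unfold_locales auto
  have C: "complexity (u_beta t) n = card (F n)" for n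
    by (simp add: complexity_def F_def)
  show ?thesis
  proof
    assume "\<exists>a b :: real. \<forall>n. real (complexity (u_beta t) n) = a * real n + b"
    then obtain a b :: real where ab: "\<And>n. real (card (F n)) = a * real n + b" using C by metis
    have "b = 1" using ab[of 0] F0 by simp
    moreover have "card (F 1) = m" using C_Suc[of 0] F0 card_P[of 0] by simp
    ultimately have a: "a = real m - 1" using ab[of 1] by simp
    show "\<forall>w. factor u w \<and> left_special m u w \<longrightarrow> is_prefix u w"
    proof (intro allI impI; rule ccontr)
      fix w assume w: "factor u w \<and> left_special m u w" and np: "\<not> is_prefix u w"
      define n where "n = length w"
      have wF: "w \<in> F n" using w by (simp add: F_def n_def)
      have wP: "w \<noteq> P n" using np by (simp add: is_prefix_def n_def)
      have Lw: "card (Lext m u w) \<ge> 2" using w by (simp add: left_special_def)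
      let ?f = "\<lambda>w. card (Lext m u w) - 1"
      have "(\<Sum>x\<in>{P n, w}. ?f x) \<le> (\<Sum>x\<in>F n. ?f x)"
        using P_F wF finite_F by (intro sum_mono2) auto
      moreover have "(\<Sum>x\<in>{P n, w}. ?f x) = (m - 1) + (card (Lext m u w) - 1)"
        using wP card_P by simp
      ultimately have s1: "(\<Sum>x\<in>F n. ?f x) \<ge> m" using Lw m2 by simp
      have "(\<Sum>x\<in>F n. card (Lext m u x)) = (\<Sum>x\<in>F n. ?f x + 1)"
      proof (rule sum.cong[OF refl])
        fix x assume "x \<in> F n"
        then have "card (Lext m u x) \<ge> 1" by (rule Lext_pos)
        then show "card (Lext m u x) = ?f x + 1" by simp
      qed
      also have "\<dots> = (\<Sum>x\<in>F n. ?f x) + card (F n)" by (subst sum.distrib) simp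
      finally have "card (F (Suc n)) \<ge> m + card (F n)" using C_Suc s1 by simp
      then have "real (card (F (Suc n))) \<ge> real m + real (card (F n))" by linarith
      moreover have "real (card (F (Suc n))) = real (card (F n)) + real m - 1"
        using ab[of "Suc n"] ab[of n] a by (simp add: algebra_simps)
      ultimately show False by simp
    qed
  next
    assume H: "\<forall>w. factor u w \<and> left_special m u w \<longrightarrow> is_prefix u w"
    have rec: "card (F (Suc n)) = m + (card (F n) - 1)" for n
    proof -
      have one: "card (Lext m u w) = 1" if "w \<in> F n - {P n}" for w
      proof -
        have wF: "w \<in> F n" and wP: "w \<noteq> P n" using that by auto
        have "\<not> is_prefix u w" using wP wF prefix_P by (force simp: F_def)
        then have "\<not> left_special m u w" using H wF by (auto simp: F_def)
        then show ?thesis using Lext_pos[OF wF] by (simp add: left_special_def)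
      qed
      have "card (F (Suc n)) = card (Lext m u (P n)) + (\<Sum>w\<in>F n - {P n}. card (Lext m u w))"
        using C_Suc[of n] sum.remove[OF finite_F P_F, of "\<lambda>w. card (Lext m u w)"] by simp
      also have "(\<Sum>w\<in>F n - {P n}. card (Lext m u w)) = card (F n - {P n})"
        using one by simp
      finally show ?thesis using card_P P_F finite_F by (simp add: card_Diff_singleton)
    qed
    have cl: "card (F n) = (m - 1) * n + 1" for n
    proof (induction n)
      case 0 then show ?case using F0 by simp
    next
      case (Suc n) then show ?case using rec[of n] m2 by (cases m) (auto simp: algebra_simps)
    qed
    show "\<exists>a b :: real. \<forall>n. real (complexity u n) = a * real n + b"
      using cl m2 by (intro exI[of _ "real m - 1"] exI[of _ 1]) (auto simp: C of_nat_diff)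
  qed
qed
end
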